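(* Assume $J$ satisfies (J1), (J2), (J5) and (JP), and $h\equiv0$. Let $u$ be a minimizer for $H$ in $Q_\ell(q)$ for some $q\in\mathbb Z^d$ and $\ell\in\mathbb N$. If $q\in\partial u$, then $$\min\Big\{\#\big(\{u=-1\}\cap Q_\ell(q)\big),\ \#\big(\{u=1\}\cap Q_\ell(q)\big)\Big\}\ge\bar c\,\ell^d,$$ for a constant $\bar c>0$ depending only on $d$, $s$, $\lambda$ and $\Lambda$.
   Context: Fix $d\ge2$, $|x|:=\sum_n|x_n|$ ($\ell^1$ norm), $|x|_\infty:=\max_n|x_n|$. Configurations are maps $u:\mathbb Z^d\to\{-1,1\}$; $\partial u:=\{i: u_i=1\text{ and }\exists j,\ |i-j|=1,\ u_j=-1\}$; $\{u=\pm1\}:=\{i\in\mathbb Z^d:u_i=\pm1\}$. With $h\equiv0$, for finite $\Gamma$: $H_\Gamma(u):=\sum_{(i,j)\in\mathbb Z^{2d}\setminus(\mathbb Z^d\setminus\Gamma)^2}J_{ij}(1-u_iu_j)$; $u$ is a minimizer for $H$ in $\Gamma$ if $H_\Gamma(u)\le H_\Gamma(v)$ for all $v$ agreeing with $u$ outside $\Gamma$. $Q_\ell(q):=\{i\in\mathbb Z^d:|i-q|_\infty\le\ell\}$. Conditions on $J:\mathbb Z^d\times\mathbb Z^d\to[0,\infty)$: (J1) $J_{ij}=J_{ji}$; (J2) $J_{ii}=0$; (J5) $J_{ij}=J_{i'j'}$ whenever $i-i'=j-j'\in\tau\mathbb Z^d$, for some $\tau\in\mathbb N$; (JP) $\lambda|i-j|^{-d-s}\le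 J_{ij}\le\Lambda|i-j|^{-d-s}$ for all $i\ne j$, for some $s\in(0,1)$, $\Lambda\ge\lambda>0$. *)

theory Defs
  imports "HOL-Analysis.Analysis"
begin

text \<open>Points of Z^d are vectors int^'n with d = CARD('n). Configurations are
maps u :: int^'n \<Rightarrow> int with values in {-1,1}.\<close>

definition l1norm :: "int^'n \<Rightarrow> int" where
  "l1norm x = (\<Sum>k\<in>UNIV. \<bar>x $ k\<bar>)"

definition linfnorm :: "int^'n \<Rightarrow> int" where
  "linfnorm x = Max (range (\<lambda>k. \<bar>x $ k\<bar>))"

definition is_config :: "(int^'n \<Rightarrow> int) \<Rightarrow> bool" where
  "is_config u \<longleftrightarrow> (\<forall>i. u i = 1 \<or> u i = -1)"

definition bdry :: "(int^'n \<Rightarrow> int) \<Rightarrow> (int^'n) set" where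
  "bdry u = {i. u i = 1 \<and> (\<exists>j. l1norm (i - j) = 1 \<and> u j = -1)}"

definition cube :: "nat \<Rightarrow> int^'n \<Rightarrow> (int^'n) set" where
  "cube l q = {i. linfnorm (i - q) \<le> int l}"

text \<open>Energy with h = 0 (as an extended nonnegative real; it is finite under (JP)).\<close>
definition Hen :: "(int^'n \<Rightarrow> int^'n \<Rightarrow> real) \<Rightarrow> (int^'n) set \<Rightarrow> (int^'n \<Rightarrow> int) \<Rightarrow> ennreal" where
  "Hen J \<Gamma> u = infsum (\<lambda>p. ennreal (J (fst p) (snd p) * (1 - real_of_int (u (fst p) * u (snd p)))))
                   (UNIV - (UNIV - \<Gamma>) \<times> (UNIV - \<Gamma>))"

definition minimizer :: "(int^'n \<Rightarrow> int^'n \<Rightarrow> real) \<Rightarrow> (int^'n) set \<Rightarrow> (int^'n \<Rightarrow> int) \<Rightarrow> bool" where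
  "minimizer J \<Gamma> u \<longleftrightarrow> (\<forall>v. is_config v \<longrightarrow> (\<forall>i. i \<notin> \<Gamma> \<longrightarrow> v i = u i) \<longrightarrow> Hen J \<Gamma> u \<le> Hen J \<Gamma> v)"

definition J1 :: "(int^'n \<Rightarrow> int^'n \<Rightarrow> real) \<Rightarrow> bool" where
  "J1 J \<longleftrightarrow> (\<forall>i j. J i j = J j i)"

definition J2 :: "(int^'n \<Rightarrow> int^'n \<Rightarrow> real) \<Rightarrow> bool" where
  "J2 J \<longleftrightarrow> (\<forall>i. J i i = 0)"

definition J5 :: "(int^'n \<Rightarrow> int^'n \<Rightarrow> real) \<Rightarrow> bool" where
  "J5 J \<longleftrightarrow> (\<exists>\<tau>::nat. \<tau> \<ge> 1 \<and> (\<forall>i i' j j'. i - i' = j - j' \<and> (\<forall>k. int \<tau> dvd (i - i') $ k)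
                  \<longrightarrow> J i j = J i' j'))"

definition JP :: "real \<Rightarrow> real \<Rightarrow> real \<Rightarrow> (int^'n \<Rightarrow> int^'n \<Rightarrow> real) \<Rightarrow> bool" where
  "JP s lam Lam J \<longleftrightarrow> (\<forall>i j. i \<noteq> j \<longrightarrow>
      lam * real_of_int (l1norm (i - j)) powr (- (real CARD('n) + s)) \<le> J i j \<and>
      J i j \<le> Lam * real_of_int (l1norm (i - j)) powr (- (real CARD('n) + s)))"

end

theory Submission
  imports Defs
begin


lemma linf_ge: "\<bar>x $ k\<bar> \<le> linfnorm (x::int^'n)"
  unfolding linfnorm_def by (rule Max_ge) auto

lemma linf_attained: "\<exists>k. linfnorm (x::int^'n) = \<bar>x $ k\<bar>"
proof -
  have "linfnorm x \<in> range (\<lambda>k. \<bar>x $ k\<bar>)" unfolding linfnorm_def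
    by (rule Max_in) auto
  then show ?thesis by auto
qed

lemma linf_le_iff: "linfnorm (x::int^'n) \<le> c \<longleftrightarrow> (\<forall>k. \<bar>x $ k\<bar> \<le> c)"
  using linf_ge linf_attained by (metis order_trans)

lemma linf_nonneg: "0 \<le> linfnorm (x::int^'n)"
  using linf_ge[of x] by (meson abs_ge_zero order_trans)

lemma linf_triangle: "linfnorm ((x::int^'n) + y) \<le> linfnorm x + linfnorm y"
  unfolding linf_le_iff by (metis abs_triangle_ineq add_mono linf_ge order_trans vector_add_component)

lemma linf_minus: "linfnorm ((x::int^'n) - y) = linfnorm (y - x)"
proof -
  have "\<forall>k. \<bar>(x-y)$k\<bar> = \<bar>(y-x)$k\<bar>" by (simp add: abs_minus_commute)
  then show ?thesis unfolding linfnorm_def by simp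
qed

lemma l1_minus: "l1norm ((x::int^'n) - y) = l1norm (y - x)"
proof -
  have "\<forall>k. \<bar>(x-y)$k\<bar> = \<bar>(y-x)$k\<bar>" by (simp add: abs_minus_commute)
  then show ?thesis unfolding l1norm_def by simp
qed

lemma linf_le_l1: "linfnorm (x::int^'n) \<le> l1norm x"
proof -
  obtain k where k: "linfnorm x = \<bar>x $ k\<bar>" using linf_attained by blast
  have "\<bar>x $ k\<bar> \<le> (\<Sum>k\<in>UNIV. \<bar>x $ k\<bar>)"
    by (rule member_le_sum) auto
  then show ?thesis using k unfolding l1norm_def by simp
qed

lemma l1_le_linf: "l1norm (x::int^'n) \<le> int CARD('n) * linfnorm x"
proof -
  have "(\<Sum>k\<in>UNIV. \<bar>x $ k\<bar>) \<le> (\<Sum>k\<in>(UNIV::'n set). linfnorm x)"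
    by (rule sum_mono) (rule linf_ge)
  then show ?thesis unfolding l1norm_def by simp
qed

lemma linf_zero_iff: "linfnorm (x::int^'n) = 0 \<longleftrightarrow> x = 0"
proof
  assume "linfnorm x = 0"
  then have "\<forall>k. \<bar>x$k\<bar> \<le> 0" using linf_le_iff by (metis order_refl)
  then show "x = 0" by (simp add: vec_eq_iff)
next
  assume "x = 0" then show "linfnorm x = 0"
    using linf_le_iff[of x 0] linf_nonneg[of x] by simp
qed

lemma cube_box: "{x::int^'n. linfnorm (x - c) \<le> R} = (\<lambda>y. y + c) ` {y. linfnorm y \<le> R}"
  by (auto simp: image_iff intro!: exI[where x="_ - c"])

lemma box_card: assumes "0 \<le> R"
  shows "finite {y::int^'n. linfnorm y \<le> R} \<and> card {y::int^'n. linfnorm y \<le> R} = nat (2*R+1) ^ CARD('n)"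
proof -
  have bij: "bij_betw vec_nth {y::int^'n. linfnorm y \<le> R} (PiE UNIV (\<lambda>_. {-R..R}))"
    unfolding bij_betw_def
  proof
    show "inj_on vec_nth {y::int^'n. linfnorm y \<le> R}" by (meson inj_onI vec_nth_inject)
    show "vec_nth ` {y::int^'n. linfnorm y \<le> R} = PiE UNIV (\<lambda>_. {-R..R})"
    proof
      show "vec_nth ` {y::int^'n. linfnorm y \<le> R} \<subseteq> PiE UNIV (\<lambda>_. {-R..R})"
      proof
        fix f assume "f \<in> vec_nth ` {y::int^'n. linfnorm y \<le> R}"
        then obtain y where y: "linfnorm (y::int^'n) \<le> R" "f = vec_nth y" by auto
        have "\<forall>k. \<bar>y$k\<bar> \<le> R" using y(1) linf_le_iff by blast
        then show "f \<in> PiE UNIV (\<lambda>_. {-R..R})" using y(2) by (auto simp: abs_le_iff) (meson minus_le_iff)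
      qed
      show "PiE UNIV (\<lambda>_. {-R..R}) \<subseteq> vec_nth ` {y::int^'n. linfnorm y \<le> R}"
      proof
        fix f assume f: "f \<in> PiE UNIV (\<lambda>_::'n. {-R..R})"
        have "vec_nth (vec_lambda f) = f" by (simp add: vec_lambda_inverse)
        moreover have "linfnorm (vec_lambda f :: int^'n) \<le> R"
          using f unfolding linf_le_iff by (auto simp: abs_le_iff PiE_iff) (meson atLeastAtMost_iff minus_le_iff)
        ultimately show "f \<in> vec_nth ` {y::int^'n. linfnorm y \<le> R}" by (metis image_eqI mem_Collect_eq)
      qed
    qed
  qed
  have fin: "finite (PiE (UNIV::'n set) (\<lambda>_. {-R..R}))" by (rule finite_PiE) auto
  have "card (PiE (UNIV::'n set) (\<lambda>_. {-R..R})) = nat (2*R+1) ^ CARD('n)"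
    by (simp add: card_PiE)
  then show ?thesis using bij fin bij_betw_finite bij_betw_same_card by (metis (no_types, lifting))
qed

lemma cube_card: assumes "0 \<le> R"
  shows "finite {x::int^'n. linfnorm (x - c) \<le> R} \<and> card {x::int^'n. linfnorm (x - c) \<le> R} = nat (2*R+1) ^ CARD('n)"
proof -
  have "inj (\<lambda>y::int^'n. y + c)" by (meson add_right_imp_eq injI)
  moreover have "finite {y::int^'n. linfnorm y \<le> R} \<and> card {y::int^'n. linfnorm y \<le> R} = nat (2*R+1) ^ CARD('n)"
    by (rule box_card[OF assms])
  ultimately show ?thesis unfolding cube_box
    by (simp add: card_image inj_on_subset)
qed



lemma mvt_step:
  fixes s :: real and n :: nat
  assumes "0 < s" "s < 1" "1 \<le> n"
  shows "(1 - s) * real n powr (-s) \<le> real n powr (1 - s) - (real n - 1) powr (1 - s)"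
proof (cases "n = 1")
  case True
  then show ?thesis using assms by simp
next
  case False
  define x where "x = real n"
  have x2: "2 \<le> x" using False assms unfolding x_def by auto
  have der: "\<And>z. x - 1 \<le> z \<Longrightarrow> z \<le> x \<Longrightarrow> ((\<lambda>z. z powr (1 - s)) has_real_derivative (1 - s) * z powr (1 - s - 1)) (at z)"
    using x2 by (intro has_real_derivative_powr) auto
  obtain z where z: "x - 1 < z" "z < x" "x powr (1-s) - (x - 1) powr (1-s) = (x - (x - 1)) * ((1 - s) * z powr (1 - s - 1))"
    using MVT2[of "x - 1" x "\<lambda>z. z powr (1 - s)" "\<lambda>z. (1 - s) * z powr (1 - s - 1)", OF _ der] by auto
  have zpos: "0 < z" using z x2 by auto
  have "x powr (-s) \<le> z powr (-s)"
    using z zpos assms by (auto simp: powr_minus divide_simps intro!: powr_mono2)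
  then show ?thesis using z assms unfolding x_def[symmetric] by (auto intro!: mult_left_mono)
qed

lemma aux_div: fixes a b c s :: real assumes "s < 1" "(1 - s) * a \<le> b - c"
  shows "a + c / (1 - s) \<le> b / (1 - s)"
proof -
  have "a + c / (1 - s) = ((1 - s) * a + c) / (1 - s)" using assms by (simp add: field_simps)
  also have "\<dots> \<le> b / (1 - s)" using assms by (intro divide_right_mono) auto
  finally show ?thesis .
qed

lemma psum_bound:
  fixes s :: real and g :: nat
  assumes "0 < s" "s < 1"
  shows "(\<Sum>r\<in>{r. r \<le> N \<and> g \<le> r}. real (r + 1 - g) powr (-s)) \<le> real (N + 1 - g) powr (1 - s) / (1 - s)"
proof (induction N)
  case 0
  show ?case
  proof (cases "g = 0")
    case True
    then have "{r. r \<le> (0::nat) \<and> g \<le> r} = {0}" by auto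
    then show ?thesis using True assms by simp
  next
    case False
    then have "{r. r \<le> (0::nat) \<and> g \<le> r} = {}" by auto
    then show ?thesis using False assms by simp
  qed
next
  case (Suc N)
  show ?case
  proof (cases "g \<le> Suc N")
    case True
    have set: "{r. r \<le> Suc N \<and> g \<le> r} = insert (Suc N) {r. r \<le> N \<and> g \<le> r}" using True by auto
    have fin: "finite {r. r \<le> N \<and> g \<le> r}" by auto
    have "(\<Sum>r\<in>{r. r \<le> Suc N \<and> g \<le> r}. real (r + 1 - g) powr (-s))
        = real (Suc N + 1 - g) powr (-s) + (\<Sum>r\<in>{r. r \<le> N \<and> g \<le> r}. real (r + 1 - g) powr (-s))"
      unfolding set using fin by (subst sum.insert) auto
    also have "\<dots> \<le> real (Suc N + 1 - g) powr (-s) + real (N + 1 - g) powr (1 - s) / (1 - s)"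
      using Suc.IH by simp
    also have "\<dots> \<le> real (Suc N + 1 - g) powr (1 - s) / (1 - s)"
    proof -
      have m: "(1 - s) * real (Suc N + 1 - g) powr (-s) \<le> real (Suc N + 1 - g) powr (1 - s) - (real (Suc N + 1 - g) - 1) powr (1 - s)"
        using mvt_step[OF assms, of "Suc N + 1 - g"] True by simp
      have e: "real (Suc N + 1 - g) - 1 = real (N + 1 - g)" using True by simp
      show ?thesis using aux_div[OF assms(2) m] unfolding e by simp
    qed
    finally show ?thesis .
  next
    case False
    then have "{r. r \<le> Suc N \<and> g \<le> r} = {}" by auto
    then show ?thesis using False assms by simp
  qed
qed



lemma swap_bound:
  fixes B :: "'a set" and g :: "'a \<Rightarrow> nat" and s :: real
  assumes "finite B" "0 < s" "s < 1"
  shows "(\<Sum>r\<in>{..N}. \<Sum>i\<in>{i\<in>B. g i \<le> r}. real (r + 1 - g i) powr (-s))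
     \<le> real (card {i\<in>B. g i \<le> N}) * (real (N + 1) powr (1 - s) / (1 - s))"
proof -
  have "(\<Sum>r\<in>{..N}. \<Sum>i\<in>{i\<in>B. g i \<le> r}. real (r + 1 - g i) powr (-s))
      = (\<Sum>i\<in>B. \<Sum>r\<in>{r\<in>{..N}. g i \<le> r}. real (r + 1 - g i) powr (-s))"
    by (rule sum.swap_restrict) (auto simp: assms)
  also have "\<dots> = (\<Sum>i\<in>{i\<in>B. g i \<le> N}. \<Sum>r\<in>{r\<in>{..N}. g i \<le> r}. real (r + 1 - g i) powr (-s))"
  proof (rule sum.mono_neutral_right)
    show "\<forall>i\<in>B - {i\<in>B. g i \<le> N}. (\<Sum>r\<in>{r\<in>{..N}. g i \<le> r}. real (r + 1 - g i) powr (-s)) = 0"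
    proof
      fix i assume "i \<in> B - {i\<in>B. g i \<le> N}"
      then have "{r\<in>{..N}. g i \<le> r} = {}" by auto
      then show "(\<Sum>r\<in>{r\<in>{..N}. g i \<le> r}. real (r + 1 - g i) powr (-s)) = 0" by (simp only: sum.empty)
    qed
  qed (auto simp: assms)
  also have "\<dots> \<le> (\<Sum>i\<in>{i\<in>B. g i \<le> N}. real (N + 1) powr (1 - s) / (1 - s))"
  proof (rule sum_mono)
    fix i assume i: "i \<in> {i\<in>B. g i \<le> N}"
    have e: "{r\<in>{..N}. g i \<le> r} = {r. r \<le> N \<and> g i \<le> r}" by auto
    have "(\<Sum>r\<in>{r\<in>{..N}. g i \<le> r}. real (r + 1 - g i) powr (-s)) \<le> real (N + 1 - g i) powr (1 - s) / (1 - s)"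
      unfolding e by (rule psum_bound[OF assms(2,3)])
    also have "\<dots> \<le> real (N + 1) powr (1 - s) / (1 - s)"
      using assms by (intro divide_right_mono powr_mono2) auto
    finally show "(\<Sum>r\<in>{r\<in>{..N}. g i \<le> r}. real (r + 1 - g i) powr (-s)) \<le> real (N + 1) powr (1 - s) / (1 - s)" .
  qed
  also have "\<dots> = real (card {i\<in>B. g i \<le> N}) * (real (N + 1) powr (1 - s) / (1 - s))" by simp
  finally show ?thesis .
qed

definition c1c :: "real \<Rightarrow> real \<Rightarrow> real" where "c1c K s = (1 - s) / (3 * K)"

lemma doubling:
  fixes B :: "'a set" and g :: "'a \<Rightarrow> nat" and K s :: real and d L R :: nat
  defines "V \<equiv> \<lambda>r. real (card {i\<in>B. g i \<le> r})"
  assumes fin: "finite B" and s: "0 < s" "s < 1" and d: "d \<ge> 1" and K: "K > 0"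
    and H: "\<And>r. 1 \<le> r \<Longrightarrow> r \<le> L \<Longrightarrow> V r powr (1 - s/d) \<le> K * (\<Sum>i\<in>{i\<in>B. g i \<le> r}. real (r + 1 - g i) powr (-s))"
    and R: "1 \<le> R" "2 * R \<le> L"
  shows "c1c K s * real R powr s * V R powr (1 - s/d) \<le> V (2 * R)"
proof -
  define p where "p = 1 - s/d"
  have mono: "\<And>r r'. r \<le> r' \<Longrightarrow> V r \<le> V r'"
    unfolding V_def using fin by (auto intro!: card_mono)
  have "real (R + 1) * V R powr p = (\<Sum>r\<in>{R..2*R}. V R powr p)" by simp
  also have "\<dots> \<le> (\<Sum>r\<in>{R..2*R}. V r powr p)"
    using mono s d by (intro sum_mono powr_mono2) (auto simp: p_def V_def divide_simps)
  also have "\<dots> \<le> (\<Sum>r\<in>{R..2*R}. K * (\<Sum>i\<in>{i\<in>B. g i \<le> r}. real (r + 1 - g i) powr (-s)))"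
    using H R unfolding p_def by (intro sum_mono) auto
  also have "\<dots> = K * (\<Sum>r\<in>{R..2*R}. (\<Sum>i\<in>{i\<in>B. g i \<le> r}. real (r + 1 - g i) powr (-s)))"
    by (simp add: sum_distrib_left)
  also have "\<dots> \<le> K * (\<Sum>r\<in>{..2*R}. (\<Sum>i\<in>{i\<in>B. g i \<le> r}. real (r + 1 - g i) powr (-s)))"
    using K by (intro mult_left_mono sum_mono2) (auto intro!: sum_nonneg)
  also have "\<dots> \<le> K * (V (2*R) * (real (2*R + 1) powr (1 - s) / (1 - s)))"
    using K swap_bound[OF fin s, of g "2*R"] unfolding V_def by (intro mult_left_mono) auto
  also have "\<dots> \<le> K * (V (2*R) * ((3 * real R) powr (1 - s) / (1 - s)))"
    using K s R by (intro mult_left_mono divide_right_mono powr_mono2) (auto simp: V_def)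
  also have "\<dots> \<le> K * (V (2*R) * (3 * real R powr (1 - s) / (1 - s)))"
  proof -
    have "(3 * real R) powr (1 - s) = 3 powr (1 - s) * real R powr (1 - s)" by (simp add: powr_mult)
    also have "\<dots> \<le> 3 * real R powr (1 - s)"
    proof -
      have "3 powr (1 - s) \<le> 3 powr 1" using s by (intro powr_mono) auto
      then show ?thesis by (intro mult_right_mono) auto
    qed
    finally show ?thesis using K s by (intro mult_left_mono divide_right_mono) (auto simp: V_def)
  qed
  finally have main: "real (R + 1) * V R powr p \<le> K * (V (2*R) * (3 * real R powr (1 - s) / (1 - s)))" .
  have Rpos: "0 < real R" using R by auto
  have split: "real R = real R powr s * real R powr (1 - s)"
    using Rpos by (simp add: powr_add[symmetric])
  have "real R powr s * real R powr (1 - s) * V R powr p \<le> real (R + 1) * V R powr p"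
    unfolding split[symmetric] by (intro mult_right_mono) auto
  with main have m2: "real R powr (1 - s) * (real R powr s * V R powr p) \<le> real R powr (1 - s) * ((3 * K / (1 - s)) * V (2*R))"
    by (simp add: field_simps)
  have "real R powr s * V R powr p \<le> (3 * K / (1 - s)) * V (2*R)"
    using mult_left_le_imp_le[OF m2] Rpos by auto
  then have "(1 - s) / (3 * K) * (real R powr s * V R powr p) \<le> (1 - s) / (3 * K) * ((3 * K / (1 - s)) * V (2*R))"
    using s K by (intro mult_left_mono) auto
  also have "\<dots> = V (2*R)" using s K by simp
  finally show ?thesis unfolding c1c_def p_def by (simp add: mult.assoc)
qed



lemma step_real:
  fixes c1 a s R V :: real and d :: nat
  assumes c1: "c1 > 0" and a: "0 < a" "a \<le> (c1 / 2^d) powr (d/s)" and s: "0 < s" "s < 1" and d: "d \<ge> 1"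
    and R: "1 \<le> R" and V: "a * R^d \<le> V"
  shows "a * (2*R)^d \<le> c1 * R powr s * V powr (1 - s/d)"
proof -
  define p where "p = 1 - s/d"
  have sd: "s / d \<le> 1" using s d by (simp add: divide_simps)
  have p0: "0 \<le> p" using sd unfolding p_def by simp
  have Rd: "R^d = R powr d" using R by (simp add: powr_realpow)
  have aRpos: "0 < a * R^d" using a R by simp
  have "(a * R^d) powr p \<le> V powr p" using aRpos V p0 by (intro powr_mono2) auto
  have e1: "(a * R^d) powr p = a powr p * R powr (d * p)"
    using a R by (simp add: powr_mult Rd powr_powr)
  have e2: "R powr s * R powr (d * p) = R^d"
  proof -
    have "s + d * p = d" unfolding p_def using d by (simp add: field_simps)
    then show ?thesis using R by (simp add: powr_add[symmetric] Rd)
  qed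
  have e3: "a powr p = a / a powr (s/d)"
    unfolding p_def using a by (simp add: powr_diff)
  have b: "a powr (s/d) \<le> c1 / 2^d"
  proof -
    have "a powr (s/d) \<le> ((c1 / 2^d) powr (d/s)) powr (s/d)"
      using a s d by (intro powr_mono2) auto
    also have "\<dots> = c1 / 2^d" using s d c1 by (simp add: powr_powr)
    finally show ?thesis .
  qed
  have apos: "0 < a powr (s/d)" using a by simp
  have "a * 2^d \<le> c1 * a powr p"
  proof -
    have "a * 2^d * a powr (s/d) \<le> a * 2^d * (c1 / 2^d)" using b a by (intro mult_left_mono) auto
    also have "\<dots> = c1 * a" by simp
    finally have "a * 2^d * a powr (s/d) \<le> c1 * a" .
    then show ?thesis unfolding e3 using apos by (simp add: divide_simps mult.commute mult.left_commute)
  qed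
  then have "a * 2^d * R^d \<le> c1 * a powr p * R^d" using R by (intro mult_right_mono) auto
  also have "\<dots> = c1 * a powr p * (R powr s * R powr (d*p))" by (simp only: e2)
  also have "\<dots> = c1 * R powr s * (a * R^d) powr p" unfolding e1 by (simp add: ac_simps)
  also have "\<dots> \<le> c1 * R powr s * V powr p"
    using \<open>(a * R^d) powr p \<le> V powr p\<close> c1 by (intro mult_left_mono) auto
  finally show ?thesis unfolding p_def by (simp add: power_mult_distrib)
qed

definition a0c :: "real \<Rightarrow> real \<Rightarrow> nat \<Rightarrow> real" where
  "a0c K s d = min 1 ((c1c K s / 2^d) powr (d/s))"

definition iterc :: "real \<Rightarrow> real \<Rightarrow> nat \<Rightarrow> real" where
  "iterc K s d = a0c K s d / 2^d"

lemma iterc_pos: "K > 0 \<Longrightarrow> s < 1 \<Longrightarrow> iterc K s d > 0"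
  unfolding iterc_def a0c_def c1c_def by simp

lemma iteration:
  fixes B :: "'a set" and g :: "'a \<Rightarrow> nat" and K s :: real and d L :: nat
  assumes fin: "finite B" and s: "0 < s" "s < 1" and d: "d \<ge> 1" and K: "K > 0"
    and H: "\<And>r. 1 \<le> r \<Longrightarrow> r \<le> L \<Longrightarrow> real (card {i\<in>B. g i \<le> r}) powr (1 - s/d) \<le> K * (\<Sum>i\<in>{i\<in>B. g i \<le> r}. real (r + 1 - g i) powr (-s))"
    and base: "1 \<le> L \<Longrightarrow> 1 \<le> card {i\<in>B. g i \<le> 1}"
  shows "iterc K s d * real L ^ d \<le> real (card {i\<in>B. g i \<le> L})"
proof -
  define V where "V = (\<lambda>r. real (card {i\<in>B. g i \<le> r}))"
  define a where "a = a0c K s d"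
  have c1: "c1c K s > 0" unfolding c1c_def using s K by simp
  have apos: "0 < a" unfolding a_def a0c_def using c1 by simp
  have a1: "a \<le> 1" "a \<le> (c1c K s / 2^d) powr (d/s)" unfolding a_def a0c_def by auto
  have mono: "\<And>r r'. r \<le> r' \<Longrightarrow> V r \<le> V r'"
    unfolding V_def using fin by (auto intro!: card_mono)
  have dy: "2^k \<le> L \<Longrightarrow> a * real (2^k) ^ d \<le> V (2^k)" for k
  proof (induction k)
    case 0
    then show ?case using base a1 unfolding V_def by simp
  next
    case (Suc k)
    then have IH: "a * real (2^k) ^ d \<le> V (2^k)" by simp
    have "a * (2 * real (2^k)) ^ d \<le> c1c K s * real (2^k) powr s * V (2^k) powr (1 - s/d)"
      by (rule step_real[OF c1 apos a1(2) s d _ IH]) simp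
    also have "\<dots> \<le> V (2 * 2^k)"
      unfolding V_def using Suc.prems
      by (intro doubling[OF fin s d K H]) auto
    finally show ?case by simp
  qed
  show ?thesis
  proof (cases "L = 0")
    case True
    then show ?thesis using d by (simp add: zero_power)
  next
    case False
    then obtain k where k: "2^k \<le> L" "L < 2^(k+1)" using ex_power_ivl1[of 2 L] by auto
    have "iterc K s d * real L ^ d \<le> iterc K s d * (real (2^(k+1))) ^ d"
    proof -
      have Lk: "real L \<le> real (2^(k+1))" using k(2) by (metis less_imp_le of_nat_le_iff)
      have ip: "0 \<le> iterc K s d" by (rule less_imp_le[OF iterc_pos[OF K s(2)]])
      show ?thesis using Lk ip by (intro mult_left_mono power_mono) auto
    qed
    also have "\<dots> = a * real (2^k) ^ d" unfolding iterc_def a_def by (simp add: power_mult_distrib)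
    also have "\<dots> \<le> V (2^k)" using dy k by simp
    also have "\<dots> \<le> V L" using mono k by simp
    finally show ?thesis unfolding V_def .
  qed
qed



lemma powr_shell:
  fixes X s :: real and d :: nat
  assumes "0 < X"
  shows "X^d * X powr (-(real d + s)) = X powr (-s)"
proof -
  have "X^d = X powr (real d)" using assms by (simp add: powr_realpow)
  then show ?thesis by (simp add: powr_add[symmetric])
qed

lemma shell_bound:
  fixes i :: "int^'n" and t :: int and s :: real and F :: "(int^'n) set" and M :: nat
  assumes s: "0 < s" and t: "1 \<le> t" and fin: "finite F"
  shows "(\<Sum>j\<in>F \<inter> {j. 2^M * t \<le> linfnorm (j - i) \<and> linfnorm (j - i) < 2^(M+1) * t}.
            real_of_int (l1norm (i - j)) powr (-(real CARD('n) + s)))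
       \<le> 8^CARD('n) * ((2 powr (-s))^M * real_of_int t powr (-s))"
proof -
  define d where "d = CARD('n)"
  define D where "D = {j. 2^M * t \<le> linfnorm (j - i) \<and> linfnorm (j - i) < 2^(M+1) * t}"
  define X where "X = (2::real)^M * real_of_int t"
  have Xpos: "0 < X" unfolding X_def using t by simp
  have fb: "\<And>j. j \<in> F \<inter> D \<Longrightarrow> real_of_int (l1norm (i - j)) powr (-(real d + s)) \<le> X powr (-(real d + s))"
  proof -
    fix j assume j: "j \<in> F \<inter> D"
    have "X \<le> real_of_int (linfnorm (j - i))" using j unfolding D_def X_def
      by (metis (mono_tags, lifting) Int_iff mem_Collect_eq of_int_le_iff of_int_mult of_int_numeral of_int_power)
    also have "\<dots> \<le> real_of_int (l1norm (i - j))" using linf_le_l1[of "i - j"] linf_minus[of i j] by simp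
    finally show "real_of_int (l1norm (i - j)) powr (-(real d + s)) \<le> X powr (-(real d + s))"
      using Xpos s by (intro powr_mono2') auto
  qed
  have "(\<Sum>j\<in>F \<inter> D. real_of_int (l1norm (i - j)) powr (-(real d + s))) \<le> real (card (F \<inter> D)) * X powr (-(real d + s))"
    using fb by (rule sum_bounded_above)
  also have "\<dots> \<le> (2^(M+3) * real_of_int t)^d * X powr (-(real d + s))"
  proof (intro mult_right_mono)
    have cc: "finite {j::int^'n. linfnorm (j - i) \<le> 2^(M+1) * t} \<and> card {j::int^'n. linfnorm (j - i) \<le> 2^(M+1) * t} = nat (2 * (2^(M+1) * t) + 1) ^ d"
      unfolding d_def by (rule cube_card) (use t in simp)
    have "F \<inter> D \<subseteq> {j. linfnorm (j - i) \<le> 2^(M+1) * t}" unfolding D_def by auto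
    then have "card (F \<inter> D) \<le> nat (2 * (2^(M+1) * t) + 1) ^ d" using cc card_mono by metis
    then have "real (card (F \<inter> D)) \<le> real (nat (2 * (2^(M+1) * t) + 1)) ^ d"
      by (metis of_nat_le_iff of_nat_power)
    also have "\<dots> = real_of_int (2 * (2^(M+1) * t) + 1) ^ d" using t by simp
    also have "\<dots> \<le> (2^(M+3) * real_of_int t)^d"
    proof (rule power_mono)
      have X: "1 \<le> (2::real)^M * real_of_int t"
      proof -
        have "1 \<le> (2::real)^M" by simp
        moreover have "1 \<le> real_of_int t" using t by simp
        ultimately show ?thesis by (metis mult_mono' mult_1 zero_le_one)
      qed
      have e1: "real_of_int (2 * (2^(M+1) * t) + 1) = 4 * ((2::real)^M * real_of_int t) + 1" by simp
      have e2: "(2::real)^(M+3) * real_of_int t = 8 * ((2::real)^M * real_of_int t)" by (simp add: power_add)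
      show "real_of_int (2 * (2^(M+1) * t) + 1) \<le> 2^(M+3) * real_of_int t"
        unfolding e1 e2 using X by linarith
    qed (use t in simp)
    finally show "real (card (F \<inter> D)) \<le> (2^(M+3) * real_of_int t)^d" .
  qed simp
  also have "\<dots> = 8^d * (X^d * X powr (-(real d + s)))"
    unfolding X_def by (simp add: power_mult_distrib power_add)
  also have "\<dots> = 8^d * X powr (-s)" using powr_shell[OF Xpos] by simp
  also have "X powr (-s) = (2 powr (-s))^M * real_of_int t powr (-s)"
  proof -
    have "X powr (-s) = (2^M) powr (-s) * real_of_int t powr (-s)" unfolding X_def using t
      by (simp add: powr_mult)
    also have "(2::real)^M = 2 powr (real M)" by (simp add: powr_realpow)
    also have "(2 powr (real M)) powr (-s) = (2 powr (-s)) powr (real M)" by (simp add: powr_powr mult.commute)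
    also have "\<dots> = (2 powr (-s))^M" by (simp add: powr_realpow)
    finally show ?thesis .
  qed
  finally show ?thesis unfolding d_def D_def .
qed

lemma tail_fin:
  fixes i :: "int^'n" and t :: int and s :: real and F :: "(int^'n) set"
  assumes s: "0 < s" and t: "1 \<le> t" and fin: "finite F" and sub: "F \<subseteq> {j. t \<le> linfnorm (j - i)}"
  shows "(\<Sum>j\<in>F. real_of_int (l1norm (i - j)) powr (-(real CARD('n) + s)))
       \<le> 8^CARD('n) / (1 - 2 powr (-s)) * real_of_int t powr (-s)"
proof -
  define f where "f = (\<lambda>j. real_of_int (l1norm (i - j)) powr (-(real CARD('n) + s)))"
  define U where "U = (\<lambda>M::nat. {j. t \<le> linfnorm (j - i) \<and> linfnorm (j - i) < 2^M * t})"
  define q where "q = (2::real) powr (-s)"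
  have q: "0 < q" "q < 1"
  proof -
    have "1 < (2::real) powr s" using s by (intro gr_one_powr) auto
    then show "0 < q" "q < 1" unfolding q_def by (auto simp: powr_minus inverse_less_1_iff)
  qed
  have ind: "(\<Sum>j\<in>F \<inter> U M. f j) \<le> 8^CARD('n) * real_of_int t powr (-s) * (\<Sum>m<M. q^m)" for M
  proof (induction M)
    case 0
    have "U 0 = {}" unfolding U_def by auto
    then show ?case by simp
  next
    case (Suc M)
    define D where "D = {j. 2^M * t \<le> linfnorm (j - i) \<and> linfnorm (j - i) < 2^(M+1) * t}"
    have un: "F \<inter> U (Suc M) = (F \<inter> U M) \<union> (F \<inter> D)"
    proof -
      have "2^M * t \<ge> t" "2^M * t \<le> 2 * 2^M * t" using t by simp_all
      then show ?thesis unfolding U_def D_def by auto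
    qed
    have dj: "(F \<inter> U M) \<inter> (F \<inter> D) = {}" unfolding U_def D_def by auto
    have "(\<Sum>j\<in>F \<inter> U (Suc M). f j) = (\<Sum>j\<in>F \<inter> U M. f j) + (\<Sum>j\<in>F \<inter> D. f j)"
      unfolding un using fin dj by (intro sum.union_disjoint) auto
    also have "\<dots> \<le> 8^CARD('n) * real_of_int t powr (-s) * (\<Sum>m<M. q^m) + 8^CARD('n) * (q^M * real_of_int t powr (-s))"
      using Suc.IH shell_bound[OF s t fin, of i M] unfolding f_def D_def q_def by (intro add_mono) auto
    also have "\<dots> = 8^CARD('n) * real_of_int t powr (-s) * (\<Sum>m<Suc M. q^m)" by (simp add: algebra_simps)
    finally show ?case .
  qed
  obtain N where N: "\<And>j. j \<in> F \<Longrightarrow> linfnorm (j - i) \<le> N" "0 \<le> N"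
  proof
    show "\<And>j. j \<in> F \<Longrightarrow> linfnorm (j - i) \<le> (\<Sum>j\<in>F. linfnorm (j - i))"
      using fin by (intro member_le_sum) (auto simp: linf_nonneg)
    show "0 \<le> (\<Sum>j\<in>F. linfnorm (j - i))" by (intro sum_nonneg) (auto simp: linf_nonneg)
  qed
  have "F \<subseteq> U (nat N)"
  proof
    fix j assume j: "j \<in> F"
    have "N < 2 ^ nat N" using N(2) by (metis int_nat_eq less_exp of_nat_less_iff of_nat_numeral of_nat_power)
    also have "\<dots> \<le> 2 ^ nat N * t" using t by simp
    finally show "j \<in> U (nat N)" using j sub N(1)[OF j] unfolding U_def by auto
  qed
  then have "F = F \<inter> U (nat N)" by auto
  then have "(\<Sum>j\<in>F. f j) \<le> 8^CARD('n) * real_of_int t powr (-s) * (\<Sum>m<nat N. q^m)" using ind by metis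
  also have "\<dots> \<le> 8^CARD('n) * real_of_int t powr (-s) * (1 / (1 - q))"
  proof (intro mult_left_mono)
    have "(\<Sum>m<nat N. q^m) = (1 - q^(nat N)) / (1 - q)" using q by (simp add: sum_gp_strict)
    also have "\<dots> \<le> 1 / (1 - q)" using q by (intro divide_right_mono) auto
    finally show "(\<Sum>m<nat N. q^m) \<le> 1 / (1 - q)" .
  qed simp
  finally show ?thesis unfolding f_def q_def by simp
qed



lemma card_n_pos: "0 < CARD('n::finite)" by simp

lemma iso_point:
  fixes A :: "(int^'n) set" and s :: real and i :: "int^'n"
  assumes fin: "finite A" and iA: "i \<in> A" and s: "0 < s"
  shows "(2 * real CARD('n)) powr (-(real CARD('n) + s)) * real (card A) powr (-s / real CARD('n))
     \<le> (\<Sum>j \<in> {j. linfnorm (j - i) \<le> \<lceil>real (card A) powr (1 / real CARD('n))\<rceil>} - A.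
            real_of_int (l1norm (i - j)) powr (-(real CARD('n) + s)))"
proof -
  define d where "d = CARD('n)"
  define m where "m = card A"
  define \<mu> where "\<mu> = real m powr (1 / real d)"
  define R where "R = \<lceil>\<mu>\<rceil>"
  define C where "C = {j::int^'n. linfnorm (j - i) \<le> R}"
  define e where "e = real d + s"
  have d1: "1 \<le> d" unfolding d_def using card_n_pos[where 'n='n] by linarith
  have m1: "1 \<le> m" unfolding m_def using fin iA by (metis One_nat_def Suc_leI card_gt_0_iff empty_iff)
  have mu1: "1 \<le> \<mu>" unfolding \<mu>_def using m1 by (intro ge_one_powr_ge_zero) auto
  have muR: "\<mu> \<le> real_of_int R" "real_of_int R \<le> 2 * \<mu>" unfolding R_def using mu1 by linarith+
  have R0: "0 \<le> R" using muR mu1 by linarith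
  have cc: "finite C \<and> card C = nat (2 * R + 1) ^ d" unfolding C_def d_def by (rule cube_card[OF R0])
  have mud: "\<mu> ^ d = real m" unfolding \<mu>_def using m1 d1
    by (simp add: powr_realpow[symmetric] powr_powr)
  have cardCA: "real m \<le> real (card (C - A))"
  proof -
    have "card C - card A \<le> card (C - A)" by (rule diff_card_le_card_Diff) (use cc fin in auto)
    then have "real (card C) - real m \<le> real (card (C - A))" unfolding m_def by linarith
    moreover have "2 * real m \<le> real (card C)"
    proof -
      have "2 * real m = 2 * \<mu>^d" using mud by simp
      also have "\<dots> \<le> 2^d * \<mu>^d" using d1 mu1
        by (intro mult_right_mono) (auto simp: self_le_power)
      also have "\<dots> = (2 * \<mu>)^d" by (simp add: power_mult_distrib)
      also have "\<dots> \<le> (real_of_int (2 * R + 1))^d" using muR mu1 by (intro power_mono) auto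
      also have "\<dots> = real (card C)" using cc R0 by simp
      finally show ?thesis .
    qed
    ultimately show ?thesis by linarith
  qed
  have pb: "(2 * real d * \<mu>) powr (-e) \<le> real_of_int (l1norm (i - j)) powr (-e)" if j: "j \<in> C - A" for j
  proof -
    have "j \<noteq> i" using j iA by auto
    then have "linfnorm (i - j) \<noteq> 0" using linf_zero_iff[of "i - j"] by auto
    then have l1: "1 \<le> linfnorm (i - j)" using linf_nonneg[of "i - j"] by linarith
    have "real_of_int (l1norm (i - j)) \<le> real d * real_of_int (linfnorm (i - j))"
      using l1_le_linf[of "i - j"] unfolding d_def by (metis of_int_le_iff of_int_mult of_int_of_nat_eq)
    also have "\<dots> \<le> real d * real_of_int R" using j linf_minus[of i j] unfolding C_def by (intro mult_left_mono) auto
    also have "\<dots> \<le> real d * (2 * \<mu>)" using muR by (intro mult_left_mono) auto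
    also have "\<dots> = 2 * real d * \<mu>" by simp
    finally have up: "real_of_int (l1norm (i - j)) \<le> 2 * real d * \<mu>" .
    have "1 \<le> l1norm (i - j)" using l1 linf_le_l1[of "i - j"] by linarith
    then show ?thesis using up s unfolding e_def by (intro powr_mono2') auto
  qed
  have "real (card (C - A)) * (2 * real d * \<mu>) powr (-e) \<le> (\<Sum>j\<in>C - A. real_of_int (l1norm (i - j)) powr (-e))"
    using pb by (rule sum_bounded_below)
  moreover have "real m * (2 * real d * \<mu>) powr (-e) \<le> real (card (C - A)) * (2 * real d * \<mu>) powr (-e)"
    using cardCA by (intro mult_right_mono) auto
  moreover have "real m * (2 * real d * \<mu>) powr (-e) = (2 * real d) powr (-e) * real m powr (-s / real d)"
  proof -
    have "(2 * real d * \<mu>) powr (-e) = (2 * real d) powr (-e) * \<mu> powr (-e)" by (simp add: powr_mult)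
    moreover have "\<mu> powr (-e) = real m powr (-e / real d)" unfolding \<mu>_def by (simp add: powr_powr)
    moreover have "real m * real m powr (-e / real d) = real m powr (-s / real d)"
    proof -
      have "real m = real m powr 1" using m1 by simp
      then have "real m * real m powr (-e / real d) = real m powr (1 + -e / real d)" by (metis powr_add)
      also have "1 + -e / real d = -s / real d" unfolding e_def using d1 by (simp add: field_simps)
      finally show ?thesis .
    qed
    ultimately show ?thesis by (simp add: ac_simps)
  qed
  ultimately show ?thesis unfolding C_def R_def \<mu>_def m_def e_def d_def by linarith
qed

lemma iso_total:
  fixes A :: "(int^'n) set" and s :: real
  assumes fin: "finite A" and s: "0 < s"
  shows "(2 * real CARD('n)) powr (-(real CARD('n) + s)) * real (card A) powr (1 - s / real CARD('n))
     \<le> (\<Sum>i\<in>A. \<Sum>j \<in> {j. linfnorm (j - i) \<le> \<lceil>real (card A) powr (1 / real CARD('n))\<rceil>} - A.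
            real_of_int (l1norm (i - j)) powr (-(real CARD('n) + s)))"
proof (cases "A = {}")
  case True then show ?thesis by simp
next
  case False
  define c where "c = (2 * real CARD('n)) powr (-(real CARD('n) + s)) * real (card A) powr (-s / real CARD('n))"
  have "real (card A) * c \<le> (\<Sum>i\<in>A. \<Sum>j \<in> {j. linfnorm (j - i) \<le> \<lceil>real (card A) powr (1 / real CARD('n))\<rceil>} - A.
            real_of_int (l1norm (i - j)) powr (-(real CARD('n) + s)))"
    unfolding c_def by (rule sum_bounded_below) (rule iso_point[OF fin _ s])
  moreover have "real (card A) * c = (2 * real CARD('n)) powr (-(real CARD('n) + s)) * real (card A) powr (1 - s / real CARD('n))"
  proof -
    have m1: "0 < real (card A)" using fin False by (simp add: card_gt_0_iff)
    have "real (card A) * real (card A) powr (-s / real CARD('n)) = real (card A) powr (1 - s / real CARD('n))"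
      using m1 by (simp add: powr_add[symmetric] powr_diff powr_minus divide_simps)
    then show ?thesis unfolding c_def by (simp add: ac_simps)
  qed
  ultimately show ?thesis by simp
qed



definition Ip :: "(int^'n \<Rightarrow> int^'n \<Rightarrow> real) \<Rightarrow> ((int^'n) \<times> (int^'n)) set \<Rightarrow> ennreal" where
  "Ip J P = infsum (\<lambda>p. ennreal (J (fst p) (snd p))) P"

lemma Ip_sup_le:
  assumes "\<And>P. finite P \<Longrightarrow> P \<subseteq> S \<Longrightarrow> (\<Sum>p\<in>P. J (fst p) (snd p)) \<le> B"
    and "\<forall>i j. J i j \<ge> 0"
  shows "Ip J S \<le> ennreal B"
proof -
  have "Ip J S = (SUP F\<in>{F. finite F \<and> F \<subseteq> S}. sum (\<lambda>p. ennreal (J (fst p) (snd p))) F)"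
    unfolding Ip_def by (rule nonneg_infsum_complete) simp
  also have "\<dots> \<le> ennreal B"
  proof (rule SUP_least)
    fix F assume F: "F \<in> {F. finite F \<and> F \<subseteq> S}"
    have "sum (\<lambda>p. ennreal (J (fst p) (snd p))) F = ennreal (\<Sum>p\<in>F. J (fst p) (snd p))"
      using assms(2) by (intro sum_ennreal) auto
    also have "\<dots> \<le> ennreal B" using assms(1) F by (intro ennreal_leI) auto
    finally show "sum (\<lambda>p. ennreal (J (fst p) (snd p))) F \<le> ennreal B" .
  qed
  finally show ?thesis .
qed

lemma Ip_ge_fin:
  assumes "finite P" "P \<subseteq> S" "\<forall>i j. J i j \<ge> 0"
  shows "ennreal (\<Sum>p\<in>P. J (fst p) (snd p)) \<le> Ip J S"
proof -
  have "ennreal (\<Sum>p\<in>P. J (fst p) (snd p)) = infsum (\<lambda>p. ennreal (J (fst p) (snd p))) P"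
    using assms by (simp add: sum_ennreal)
  also have "\<dots> \<le> Ip J S" unfolding Ip_def using assms(2)
    by (intro infsum_mono_neutral) (auto intro: nonneg_summable_on_complete)
  finally show ?thesis .
qed

lemma Ip_mono: "P \<subseteq> S \<Longrightarrow> Ip J P \<le> Ip J S"
  unfolding Ip_def by (intro infsum_mono_neutral) (auto intro: nonneg_summable_on_complete)

lemma Ip_union: "P \<inter> S = {} \<Longrightarrow> Ip J (P \<union> S) = Ip J P + Ip J S"
  unfolding Ip_def by (intro infsum_Un_disjoint) (auto intro: nonneg_summable_on_complete)



definition fw :: "(int^'n \<Rightarrow> int^'n \<Rightarrow> real) \<Rightarrow> (int^'n \<Rightarrow> int) \<Rightarrow> (int^'n) \<times> (int^'n) \<Rightarrow> ennreal" where
  "fw J w p = ennreal (J (fst p) (snd p) * (1 - real_of_int (w (fst p) * w (snd p))))"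

lemma Hen_fw: "Hen J \<Gamma> w = infsum (fw J w) (UNIV - (UNIV - \<Gamma>) \<times> (UNIV - \<Gamma>))"
  unfolding Hen_def fw_def by simp

lemma fw_swap: "J1 J \<Longrightarrow> fw J w \<circ> prod.swap = fw J w"
  unfolding fw_def J1_def by (auto simp: fun_eq_iff mult.commute)

lemma infsum_fw_P:
  fixes A :: "(int^'n) set"
  assumes J1: "J1 J" and cfg: "is_config w" and c: "\<And>i. i \<in> A \<Longrightarrow> w i = c" "c = 1 \<or> c = -1"
  shows "infsum (fw J w) (A \<times> (UNIV - A) \<union> ((UNIV - A) \<times> A \<union> A \<times> A)) = 2 * infsum (fw J w) (A \<times> (UNIV - A))"
proof -
  have sm: "\<And>X. fw J w summable_on X" by (rule nonneg_summable_on_complete) simp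
  have z: "infsum (fw J w) (A \<times> A) = 0"
  proof -
    have "\<And>p. p \<in> A \<times> A \<Longrightarrow> fw J w p = 0" unfolding fw_def using c by auto
    then show ?thesis by (simp add: infsum_0)
  qed
  have sw: "infsum (fw J w) ((UNIV - A) \<times> A) = infsum (fw J w) (A \<times> (UNIV - A))"
  proof -
    have "(UNIV - A) \<times> A = prod.swap ` (A \<times> (UNIV - A))" by auto
    then have "infsum (fw J w) ((UNIV - A) \<times> A) = infsum (fw J w \<circ> prod.swap) (A \<times> (UNIV - A))"
      by (simp add: infsum_reindex)
    then show ?thesis using fw_swap[OF J1] by simp
  qed
  have "infsum (fw J w) (A \<times> (UNIV - A) \<union> ((UNIV - A) \<times> A \<union> A \<times> A))
      = infsum (fw J w) (A \<times> (UNIV - A)) + (infsum (fw J w) ((UNIV - A) \<times> A) + infsum (fw J w) (A \<times> A))"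
    by (subst infsum_Un_disjoint, (auto intro: sm)[3], subst infsum_Un_disjoint, auto intro: sm)
  also have "\<dots> = 2 * infsum (fw J w) (A \<times> (UNIV - A))" unfolding z sw by (simp add: mult_2)
  finally show ?thesis .
qed

lemma energy_compare:
  fixes J :: "int^'n \<Rightarrow> int^'n \<Rightarrow> real" and u :: "int^'n \<Rightarrow> int" and \<Gamma> A :: "(int^'n) set"
  assumes Jnn: "\<forall>i j. J i j \<ge> 0" and J1: "J1 J" and cfg: "is_config u" and min: "minimizer J \<Gamma> u"
    and A\<Gamma>: "A \<subseteq> \<Gamma>" and Au: "\<And>i. i \<in> A \<Longrightarrow> u i = -1" and fin: "Hen J \<Gamma> u < top"
  shows "Ip J (A \<times> (UNIV - A)) \<le> 2 * Ip J (A \<times> ({i. u i = -1} - A))"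
proof -
  define v where "v = (\<lambda>i. if i \<in> A then 1 else u i)"
  define S where "S = UNIV - (UNIV - \<Gamma>) \<times> (UNIV - \<Gamma>)"
  define P where "P = A \<times> (UNIV - A) \<union> ((UNIV - A) \<times> A \<union> A \<times> A)"
  have sm: "\<And>X f. (f :: _ \<Rightarrow> ennreal) summable_on X" by (rule nonneg_summable_on_complete) simp
  have cfgv: "is_config v" using cfg unfolding v_def is_config_def by auto
  have HuHv: "Hen J \<Gamma> u \<le> Hen J \<Gamma> v"
  proof -
    have "\<forall>i. i \<notin> \<Gamma> \<longrightarrow> v i = u i" using A\<Gamma> unfolding v_def by auto
    then show ?thesis using min cfgv unfolding minimizer_def by blast
  qed
  have PS: "P \<subseteq> S" unfolding P_def S_def using A\<Gamma> by auto
  have split: "\<And>w. Hen J \<Gamma> w = infsum (fw J w) P + infsum (fw J w) (S - P)"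
  proof -
    fix w
    have "S = P \<union> (S - P)" using PS by auto
    then show "Hen J \<Gamma> w = infsum (fw J w) P + infsum (fw J w) (S - P)"
      unfolding Hen_fw S_def[symmetric] by (metis Diff_disjoint infsum_Un_disjoint sm)
  qed
  have RR: "infsum (fw J u) (S - P) = infsum (fw J v) (S - P)"
  proof (rule infsum_cong)
    fix p assume "p \<in> S - P"
    then have "fst p \<notin> A" "snd p \<notin> A" unfolding P_def by (cases p, auto)+
    then show "fw J u p = fw J v p" unfolding fw_def v_def by simp
  qed
  have Rfin: "infsum (fw J u) (S - P) \<noteq> top"
  proof -
    have "infsum (fw J u) (S - P) \<le> Hen J \<Gamma> u" using split[of u] by simp
    then show ?thesis using fin by (metis top.not_eq_extremum order_le_less_trans)
  qed
  have Pu: "infsum (fw J u) P = 2 * infsum (fw J u) (A \<times> (UNIV - A))"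
    unfolding P_def by (rule infsum_fw_P[OF J1 cfg, of A "-1"]) (use Au in auto)
  have Pv: "infsum (fw J v) P = 2 * infsum (fw J v) (A \<times> (UNIV - A))"
    unfolding P_def by (rule infsum_fw_P[OF J1 cfgv, of A "1"]) (auto simp: v_def)
  have Xu: "infsum (fw J u) (A \<times> (UNIV - A)) = 2 * Ip J (A \<times> {i. u i = 1})"
  proof -
    have "infsum (fw J u) (A \<times> (UNIV - A)) = infsum (\<lambda>p. 2 * ennreal (J (fst p) (snd p))) (A \<times> {i. u i = 1})"
    proof (rule infsum_cong_neutral)
      fix p assume p: "p \<in> A \<times> (UNIV - A) - A \<times> {i. u i = 1}"
      have "u (snd p) \<noteq> 1" "fst p \<in> A" using p by (cases p, auto)+
      then have "u (snd p) = -1" "u (fst p) = -1" using cfg Au unfolding is_config_def by blast+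
      then show "fw J u p = 0" unfolding fw_def by simp
    next
      fix p assume p: "p \<in> A \<times> {i. u i = 1} - A \<times> (UNIV - A)"
      then show "2 * ennreal (J (fst p) (snd p)) = 0" using Au by auto
    next
      fix p assume p: "p \<in> A \<times> (UNIV - A) \<inter> A \<times> {i. u i = 1}"
      then have "u (snd p) = 1" "u (fst p) = -1" using Au by auto
      then show "fw J u p = 2 * ennreal (J (fst p) (snd p))" unfolding fw_def using Jnn
        by (simp add: ennreal_mult'' mult.commute)
    qed
    also have "\<dots> = 2 * Ip J (A \<times> {i. u i = 1})" unfolding Ip_def
      unfolding mult_2 by (rule infsum_add) (rule sm)+
    finally show ?thesis .
  qed
  have Xv: "infsum (fw J v) (A \<times> (UNIV - A)) = 2 * Ip J (A \<times> ({i. u i = -1} - A))"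
  proof -
    have "infsum (fw J v) (A \<times> (UNIV - A)) = infsum (\<lambda>p. 2 * ennreal (J (fst p) (snd p))) (A \<times> ({i. u i = -1} - A))"
    proof (rule infsum_cong_neutral)
      fix p assume p: "p \<in> A \<times> (UNIV - A) - A \<times> ({i. u i = -1} - A)"
      have "u (snd p) \<noteq> -1" "fst p \<in> A" "snd p \<notin> A" using p by (cases p, auto)+
      then have "u (snd p) = 1" "fst p \<in> A" "snd p \<notin> A" using cfg unfolding is_config_def by blast+
      then show "fw J v p = 0" unfolding fw_def v_def by simp
    next
      fix p assume p: "p \<in> A \<times> ({i. u i = -1} - A) - A \<times> (UNIV - A)"
      then show "2 * ennreal (J (fst p) (snd p)) = 0" by auto
    next
      fix p assume p: "p \<in> A \<times> (UNIV - A) \<inter> A \<times> ({i. u i = -1} - A)"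
      then have "u (snd p) = -1" "fst p \<in> A" "snd p \<notin> A" by auto
      then show "fw J v p = 2 * ennreal (J (fst p) (snd p))" unfolding fw_def v_def using Jnn
        by (simp add: ennreal_mult'' mult.commute)
    qed
    also have "\<dots> = 2 * Ip J (A \<times> ({i. u i = -1} - A))" unfolding Ip_def
      unfolding mult_2 by (rule infsum_add) (rule sm)+
    finally show ?thesis .
  qed
  have "infsum (fw J u) (S - P) + 2 * (2 * Ip J (A \<times> {i. u i = 1}))
      \<le> infsum (fw J u) (S - P) + 2 * (2 * Ip J (A \<times> ({i. u i = -1} - A)))"
    using HuHv unfolding split[of u] split[of v] Pu Pv Xu Xv RR by (simp add: add.commute)
  then have "2 * (2 * Ip J (A \<times> {i. u i = 1})) \<le> 2 * (2 * Ip J (A \<times> ({i. u i = -1} - A)))"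
    using Rfin by (simp add: ennreal_add_left_cancel_le)
  then have le: "Ip J (A \<times> {i. u i = 1}) \<le> Ip J (A \<times> ({i. u i = -1} - A))"
    by (simp add: ennreal_mult_le_mult_iff)
  have un: "A \<times> (UNIV - A) = A \<times> {i. u i = 1} \<union> A \<times> ({i. u i = -1} - A)"
    using cfg Au unfolding is_config_def by auto
  have "Ip J (A \<times> (UNIV - A)) = Ip J (A \<times> {i. u i = 1}) + Ip J (A \<times> ({i. u i = -1} - A))"
    unfolding un by (rule Ip_union) auto
  also have "\<dots> \<le> 2 * Ip J (A \<times> ({i. u i = -1} - A))" using le by (simp add: mult_2 add_right_mono)
  finally show ?thesis .
qed



definition Ctc :: "real \<Rightarrow> nat \<Rightarrow> real" where "Ctc s d = 8^d / (1 - 2 powr (-s))"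

lemma Ctc_pos: "0 < s \<Longrightarrow> 0 < Ctc s d"
proof -
  assume s: "0 < s"
  have "1 < (2::real) powr s" using s by (intro gr_one_powr) auto
  then have "2 powr (-s) < (1::real)" by (auto simp: powr_minus inverse_less_1_iff)
  then show ?thesis unfolding Ctc_def by simp
qed

lemma JP_upper: "JP s lam Lam J \<Longrightarrow> i \<noteq> j \<Longrightarrow> J i j \<le> Lam * real_of_int (l1norm (i - j)) powr (-(real CARD('n) + s))"
  for J :: "int^'n \<Rightarrow> int^'n \<Rightarrow> real" unfolding JP_def by auto

lemma JP_lower: "JP s lam Lam J \<Longrightarrow> i \<noteq> j \<Longrightarrow> lam * real_of_int (l1norm (i - j)) powr (-(real CARD('n) + s)) \<le> J i j"
  for J :: "int^'n \<Rightarrow> int^'n \<Rightarrow> real" unfolding JP_def by auto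

lemma tailJ_fin:
  fixes J :: "int^'n \<Rightarrow> int^'n \<Rightarrow> real" and i :: "int^'n" and t :: int
  assumes JP: "JP s lam Lam J" and J2: "J2 J" and Lam: "0 < Lam" and s: "0 < s" and t: "1 \<le> t"
    and fin: "finite F" and sub: "F - {i} \<subseteq> {j. t \<le> linfnorm (j - i)}"
  shows "(\<Sum>j\<in>F. J i j) \<le> Lam * Ctc s CARD('n) * real_of_int t powr (-s)"
proof -
  have "(\<Sum>j\<in>F. J i j) = (\<Sum>j\<in>F - {i}. J i j)"
    using J2 fin unfolding J2_def by (intro sum.mono_neutral_right) auto
  also have "\<dots> \<le> (\<Sum>j\<in>F - {i}. Lam * real_of_int (l1norm (i - j)) powr (-(real CARD('n) + s)))"
    using JP by (intro sum_mono JP_upper) auto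
  also have "\<dots> = Lam * (\<Sum>j\<in>F - {i}. real_of_int (l1norm (i - j)) powr (-(real CARD('n) + s)))"
    by (simp add: sum_distrib_left)
  also have "\<dots> \<le> Lam * (8^CARD('n) / (1 - 2 powr (-s)) * real_of_int t powr (-s))"
    using tail_fin[OF s t _ sub] fin Lam by (intro mult_left_mono) auto
  finally show ?thesis unfolding Ctc_def by (simp add: mult.assoc)
qed

lemma Ip_Sigma_upper:
  fixes J :: "int^'n \<Rightarrow> int^'n \<Rightarrow> real" and A :: "(int^'n) set" and t :: "int^'n \<Rightarrow> int"
  assumes JP: "JP s lam Lam J" and J2: "J2 J" and Jnn: "\<forall>i j. J i j \<ge> 0" and Lam: "0 < Lam" and s: "0 < s"
    and finA: "finite A" and t: "\<And>i. i \<in> A \<Longrightarrow> 1 \<le> t i"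
    and T: "\<And>i. i \<in> A \<Longrightarrow> T i - {i} \<subseteq> {j. t i \<le> linfnorm (j - i)}"
  shows "Ip J (Sigma A T) \<le> ennreal (\<Sum>i\<in>A. Lam * Ctc s CARD('n) * real_of_int (t i) powr (-s))"
proof (rule Ip_sup_le[OF _ Jnn])
  fix P assume P: "finite P" "P \<subseteq> Sigma A T"
  define Y where "Y = snd ` P"
  have finY: "finite Y" unfolding Y_def using P by auto
  have "(\<Sum>p\<in>P. J (fst p) (snd p)) \<le> (\<Sum>p\<in>Sigma A (\<lambda>i. T i \<inter> Y). J (fst p) (snd p))"
    using P Jnn finA finY unfolding Y_def by (intro sum_mono2) (auto intro: finite_SigmaI, force)
  also have "\<dots> = (\<Sum>i\<in>A. \<Sum>j\<in>T i \<inter> Y. J i j)"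
    using finA finY by (subst sum.Sigma) (auto simp: case_prod_beta)
  also have "\<dots> \<le> (\<Sum>i\<in>A. Lam * Ctc s CARD('n) * real_of_int (t i) powr (-s))"
  proof (rule sum_mono)
    fix i assume i: "i \<in> A"
    show "(\<Sum>j\<in>T i \<inter> Y. J i j) \<le> Lam * Ctc s CARD('n) * real_of_int (t i) powr (-s)"
      by (rule tailJ_fin[OF JP J2 Lam s t[OF i]]) (use finY T[OF i] in auto)
  qed
  finally show "(\<Sum>p\<in>P. J (fst p) (snd p)) \<le> (\<Sum>i\<in>A. Lam * Ctc s CARD('n) * real_of_int (t i) powr (-s))" .
qed

lemma Ip_swap: "J1 J \<Longrightarrow> Ip J (prod.swap ` P) = Ip J P"
proof -
  assume J1: "J1 J"
  have "Ip J (prod.swap ` P) = infsum ((\<lambda>p. ennreal (J (fst p) (snd p))) \<circ> prod.swap) P"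
    unfolding Ip_def by (simp add: infsum_reindex)
  also have "(\<lambda>p. ennreal (J (fst p) (snd p))) \<circ> prod.swap = (\<lambda>p. ennreal (J (fst p) (snd p)))"
    using J1 unfolding J1_def by (auto simp: fun_eq_iff)
  finally show ?thesis unfolding Ip_def .
qed

lemma linf_ge1: "j \<noteq> i \<Longrightarrow> 1 \<le> linfnorm ((j::int^'n) - i)"
proof -
  assume "j \<noteq> i"
  then have "linfnorm (j - i) \<noteq> 0" using linf_zero_iff[of "j - i"] by auto
  then show ?thesis using linf_nonneg[of "j - i"] by linarith
qed

lemma Hen_finite:
  fixes J :: "int^'n \<Rightarrow> int^'n \<Rightarrow> real" and \<Gamma> :: "(int^'n) set"
  assumes JP: "JP s lam Lam J" and J1: "J1 J" and J2: "J2 J" and Jnn: "\<forall>i j. J i j \<ge> 0" and Lam: "0 < Lam" and s: "0 < s"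
    and fin: "finite \<Gamma>" and cfg: "is_config u"
  shows "Hen J \<Gamma> u < top"
proof -
  define S where "S = UNIV - (UNIV - \<Gamma>) \<times> (UNIV - \<Gamma>)"
  have sm: "\<And>X f. (f :: _ \<Rightarrow> ennreal) summable_on X" by (rule nonneg_summable_on_complete) simp
  have row: "Ip J (\<Gamma> \<times> UNIV) \<le> ennreal (\<Sum>i\<in>\<Gamma>. Lam * Ctc s CARD('n) * real_of_int 1 powr (-s))"
    by (rule Ip_Sigma_upper[OF JP J2 Jnn Lam s fin]) (auto intro: linf_ge1)
  have "Hen J \<Gamma> u \<le> infsum (\<lambda>p. ennreal (J (fst p) (snd p)) + ennreal (J (fst p) (snd p))) S"
    unfolding Hen_def S_def
  proof (rule infsum_mono[OF sm sm])
    fix p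
    have "u (fst p) = 1 \<or> u (fst p) = -1" "u (snd p) = 1 \<or> u (snd p) = -1" using cfg unfolding is_config_def by auto
    then have "1 - real_of_int (u (fst p) * u (snd p)) \<le> 2" by auto
    moreover have "0 \<le> J (fst p) (snd p)" using Jnn by auto
    ultimately have "J (fst p) (snd p) * (1 - real_of_int (u (fst p) * u (snd p))) \<le> J (fst p) (snd p) + J (fst p) (snd p)"
      by (metis mult.commute mult_2 mult_left_mono)
    then show "ennreal (J (fst p) (snd p) * (1 - real_of_int (u (fst p) * u (snd p)))) \<le> ennreal (J (fst p) (snd p)) + ennreal (J (fst p) (snd p))"
      using Jnn by (simp add: ennreal_plus[symmetric] ennreal_leI del: ennreal_plus)
  qed
  also have "\<dots> = Ip J S + Ip J S" unfolding Ip_def by (rule infsum_add) (rule sm)+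
  also have "Ip J S \<le> Ip J (\<Gamma> \<times> UNIV \<union> (UNIV \<times> \<Gamma> - \<Gamma> \<times> UNIV))"
    unfolding S_def by (rule Ip_mono) auto
  also have "\<dots> = Ip J (\<Gamma> \<times> UNIV) + Ip J (UNIV \<times> \<Gamma> - \<Gamma> \<times> UNIV)" by (rule Ip_union) auto
  also have "Ip J (UNIV \<times> \<Gamma> - \<Gamma> \<times> UNIV) \<le> Ip J (UNIV \<times> \<Gamma>)" by (rule Ip_mono) auto
  also have "UNIV \<times> \<Gamma> = prod.swap ` (\<Gamma> \<times> UNIV)" by auto
  also have "Ip J (prod.swap ` (\<Gamma> \<times> UNIV)) = Ip J (\<Gamma> \<times> UNIV)" by (rule Ip_swap[OF J1])
  finally have "Hen J \<Gamma> u \<le> (Ip J (\<Gamma> \<times> UNIV) + Ip J (\<Gamma> \<times> UNIV)) + (Ip J (\<Gamma> \<times> UNIV) + Ip J (\<Gamma> \<times> UNIV))"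
    by (simp add: add_mono)
  also have "\<dots> < top"
  proof -
    have "Ip J (\<Gamma> \<times> UNIV) < top" using row by (rule order_le_less_trans) simp
    then show ?thesis by simp
  qed
  finally show ?thesis .
qed



definition cisoc :: "real \<Rightarrow> nat \<Rightarrow> real" where
  "cisoc s d = (2 * real d) powr (-(real d + s))"

lemma cisoc_pos: "d \<ge> 1 \<Longrightarrow> 0 < cisoc s d" unfolding cisoc_def by simp

lemma Ip_iso_lower:
  fixes J :: "int^'n \<Rightarrow> int^'n \<Rightarrow> real" and A :: "(int^'n) set"
  assumes JP: "JP s lam Lam J" and Jnn: "\<forall>i j. J i j \<ge> 0" and lam: "0 < lam" and s: "0 < s" and finA: "finite A"
  shows "ennreal (lam * (cisoc s CARD('n) * real (card A) powr (1 - s / real CARD('n)))) \<le> Ip J (A \<times> (UNIV - A))"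
proof -
  define R where "R = \<lceil>real (card A) powr (1 / real CARD('n))\<rceil>"
  define C where "C = (\<lambda>i::int^'n. {j. linfnorm (j - i) \<le> R} - A)"
  have R0: "0 \<le> R"
  proof -
    have "0 \<le> real (card A) powr (1 / real CARD('n))" by simp
    then show ?thesis unfolding R_def using le_of_int_ceiling[of "real (card A) powr (1 / real CARD('n))"] by linarith
  qed
  have finC: "\<And>i. finite (C i)" unfolding C_def using cube_card[OF R0] by auto
  have "lam * (cisoc s CARD('n) * real (card A) powr (1 - s / real CARD('n)))
      \<le> lam * (\<Sum>i\<in>A. \<Sum>j\<in>C i. real_of_int (l1norm (i - j)) powr (-(real CARD('n) + s)))"
    unfolding C_def R_def cisoc_def using lam by (intro mult_left_mono iso_total[OF finA s]) auto
  also have "\<dots> = (\<Sum>i\<in>A. \<Sum>j\<in>C i. lam * real_of_int (l1norm (i - j)) powr (-(real CARD('n) + s)))"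
    by (simp add: sum_distrib_left)
  also have "\<dots> \<le> (\<Sum>i\<in>A. \<Sum>j\<in>C i. J i j)"
    using JP unfolding C_def by (intro sum_mono JP_lower) auto
  also have "\<dots> = (\<Sum>p\<in>Sigma A C. J (fst p) (snd p))"
    using finA finC by (subst sum.Sigma) (auto simp: case_prod_beta)
  finally have le: "lam * (cisoc s CARD('n) * real (card A) powr (1 - s / real CARD('n))) \<le> (\<Sum>p\<in>Sigma A C. J (fst p) (snd p))" .
  have "ennreal (\<Sum>p\<in>Sigma A C. J (fst p) (snd p)) \<le> Ip J (A \<times> (UNIV - A))"
    by (rule Ip_ge_fin) (use finA finC Jnn in \<open>auto simp: C_def\<close>)
  with le show ?thesis by (meson ennreal_leI order_trans)
qed

lemma per_radius:
  fixes J :: "int^'n \<Rightarrow> int^'n \<Rightarrow> real" and u :: "int^'n \<Rightarrow> int" and q :: "int^'n"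
  assumes Jnn: "\<forall>i j. J i j \<ge> 0" and J1: "J1 J" and J2: "J2 J" and JP: "JP s lam Lam J"
    and lam: "0 < lam" "lam \<le> Lam" and s: "0 < s"
    and cfg: "is_config u" and min: "minimizer J (cube l q) u" and rl: "r \<le> l"
  defines "A \<equiv> {i. u i = -1} \<inter> cube r q"
  shows "lam * (cisoc s CARD('n) * real (card A) powr (1 - s / real CARD('n)))
     \<le> 2 * (\<Sum>i\<in>A. Lam * Ctc s CARD('n) * real_of_int (int r + 1 - linfnorm (i - q)) powr (-s))"
proof -
  have Lam: "0 < Lam" using lam by linarith
  have cubefin: "\<And>r'. finite (cube r' q)"
  proof -
    fix r' :: nat show "finite (cube r' q)" unfolding cube_def using cube_card[of "int r'" q] by auto
  qed
  have finA: "finite A" unfolding A_def using cubefin by auto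
  have Asub: "A \<subseteq> cube l q" unfolding A_def cube_def using rl by auto
  have Au: "\<And>i. i \<in> A \<Longrightarrow> u i = -1" unfolding A_def by auto
  have Hfin: "Hen J (cube l q) u < top" by (rule Hen_finite[OF JP J1 J2 Jnn Lam s cubefin cfg])
  define t where "t = (\<lambda>i. int r + 1 - linfnorm (i - q))"
  have "ennreal (lam * (cisoc s CARD('n) * real (card A) powr (1 - s / real CARD('n)))) \<le> Ip J (A \<times> (UNIV - A))"
    by (rule Ip_iso_lower[OF JP Jnn lam(1) s finA])
  also have "\<dots> \<le> 2 * Ip J (A \<times> ({i. u i = -1} - A))"
    by (rule energy_compare[OF Jnn J1 cfg min Asub Au Hfin])
  also have "Ip J (A \<times> ({i. u i = -1} - A)) \<le> Ip J (Sigma A (\<lambda>_. UNIV - cube r q))"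
    by (rule Ip_mono) (auto simp: A_def)
  also have "\<dots> \<le> ennreal (\<Sum>i\<in>A. Lam * Ctc s CARD('n) * real_of_int (t i) powr (-s))"
  proof (rule Ip_Sigma_upper[OF JP J2 Jnn Lam s finA])
    fix i assume i: "i \<in> A"
    then have li: "linfnorm (i - q) \<le> int r" unfolding A_def cube_def by auto
    then show "1 \<le> t i" unfolding t_def by simp
    show "(UNIV - cube r q) - {i} \<subseteq> {j. t i \<le> linfnorm (j - i)}"
    proof
      fix j assume "j \<in> (UNIV - cube r q) - {i}"
      then have "int r < linfnorm (j - q)" unfolding cube_def by auto
      moreover have "linfnorm (j - q) \<le> linfnorm (j - i) + linfnorm (i - q)"
        using linf_triangle[of "j - i" "i - q"] by simp
      ultimately show "j \<in> {j. t i \<le> linfnorm (j - i)}" unfolding t_def by auto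
    qed
  qed
  finally have "ennreal (lam * (cisoc s CARD('n) * real (card A) powr (1 - s / real CARD('n))))
      \<le> 2 * ennreal (\<Sum>i\<in>A. Lam * Ctc s CARD('n) * real_of_int (t i) powr (-s))"
    by (simp add: mult_left_mono)
  also have "\<dots> = ennreal (2 * (\<Sum>i\<in>A. Lam * Ctc s CARD('n) * real_of_int (t i) powr (-s)))"
    by (simp add: ennreal_mult')
  finally show ?thesis unfolding t_def
    by (subst (asm) ennreal_le_iff) (auto intro!: sum_nonneg mult_nonneg_nonneg simp: Lam[THEN less_imp_le] Ctc_pos[OF s, THEN less_imp_le])
qed



definition Kc :: "real \<Rightarrow> real \<Rightarrow> real \<Rightarrow> nat \<Rightarrow> real" where
  "Kc lam Lam s d = 2 * Lam * Ctc s d / (lam * cisoc s d)"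

lemma count_lower:
  fixes J :: "int^'n \<Rightarrow> int^'n \<Rightarrow> real" and u :: "int^'n \<Rightarrow> int" and q :: "int^'n"
  assumes Jnn: "\<forall>i j. J i j \<ge> 0" and J1: "J1 J" and J2: "J2 J" and JP: "JP s lam Lam J"
    and lam: "0 < lam" "lam \<le> Lam" and s: "0 < s" "s < 1"
    and cfg: "is_config u" and min: "minimizer J (cube l q) u"
    and p: "u p = -1" "linfnorm (p - q) \<le> 1"
  shows "iterc (Kc lam Lam s CARD('n)) s CARD('n) * real l ^ CARD('n) \<le> real (card ({i. u i = -1} \<inter> cube l q))"
proof -
  define d where "d = CARD('n)"
  define B where "B = {i. u i = -1} \<inter> cube l q"
  define g where "g = (\<lambda>i. nat (linfnorm (i - q)))"
  define K where "K = Kc lam Lam s d"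
  have d1: "1 \<le> d" unfolding d_def using card_n_pos[where 'n='n] by linarith
  have Lam: "0 < Lam" using lam by linarith
  have ciso: "0 < cisoc s d" using cisoc_pos[OF d1] .
  have Ct: "0 < Ctc s d" using Ctc_pos[OF s(1)] .
  have K: "0 < K" unfolding K_def Kc_def using Lam Ct ciso lam by simp
  have finB: "finite B" unfolding B_def cube_def using cube_card[of "int l" q] by auto
  have sets: "\<And>r. r \<le> l \<Longrightarrow> {i\<in>B. g i \<le> r} = {i. u i = -1} \<inter> cube r q"
    unfolding B_def g_def cube_def using linf_nonneg by (auto simp: nat_le_iff)
  have H: "real (card {i\<in>B. g i \<le> r}) powr (1 - s/d) \<le> K * (\<Sum>i\<in>{i\<in>B. g i \<le> r}. real (r + 1 - g i) powr (-s))"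
    if r: "1 \<le> r" "r \<le> l" for r
  proof -
    define A where "A = {i. u i = -1} \<inter> cube r q"
    have pr: "lam * (cisoc s d * real (card A) powr (1 - s / real d))
     \<le> 2 * (\<Sum>i\<in>A. Lam * Ctc s d * real_of_int (int r + 1 - linfnorm (i - q)) powr (-s))"
      unfolding A_def d_def by (rule per_radius[OF Jnn J1 J2 JP lam s(1) cfg min r(2)])
    have eq: "(\<Sum>i\<in>A. real_of_int (int r + 1 - linfnorm (i - q)) powr (-s)) = (\<Sum>i\<in>A. real (r + 1 - g i) powr (-s))"
    proof (rule sum.cong)
      fix i assume "i \<in> A"
      then have "linfnorm (i - q) \<le> int r" unfolding A_def cube_def by auto
      then have "real_of_int (int r + 1 - linfnorm (i - q)) = real (r + 1 - g i)"
        unfolding g_def using linf_nonneg[of "i - q"] by (simp add: of_nat_diff nat_le_iff)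
      then show "real_of_int (int r + 1 - linfnorm (i - q)) powr (-s) = real (r + 1 - g i) powr (-s)" by simp
    qed simp
    have "2 * (\<Sum>i\<in>A. Lam * Ctc s d * real_of_int (int r + 1 - linfnorm (i - q)) powr (-s))
        = (lam * cisoc s d) * (K * (\<Sum>i\<in>A. real (r + 1 - g i) powr (-s)))"
      unfolding K_def Kc_def eq[symmetric] using lam ciso by (simp add: sum_distrib_left field_simps)
    with pr have "(lam * cisoc s d) * real (card A) powr (1 - s / real d) \<le> (lam * cisoc s d) * (K * (\<Sum>i\<in>A. real (r + 1 - g i) powr (-s)))"
      by (simp add: mult.assoc)
    then have "real (card A) powr (1 - s / real d) \<le> K * (\<Sum>i\<in>A. real (r + 1 - g i) powr (-s))"
      using lam ciso by (simp add: mult_le_cancel_left_pos)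
    then show ?thesis using sets[OF r(2)] unfolding A_def by simp
  qed
  have base: "1 \<le> card {i\<in>B. g i \<le> 1}" if "1 \<le> l"
  proof -
    have "p \<in> {i\<in>B. g i \<le> 1}" using p that unfolding B_def g_def cube_def by auto
    moreover have "finite {i\<in>B. g i \<le> 1}" using finB by auto
    ultimately show ?thesis by (metis Suc_leI card_gt_0_iff empty_iff One_nat_def)
  qed
  have "iterc K s d * real l ^ d \<le> real (card {i\<in>B. g i \<le> l})"
    by (rule iteration[OF finB s d1 K H base]) auto
  also have "{i\<in>B. g i \<le> l} = B" using sets[of l] unfolding B_def by auto
  finally show ?thesis unfolding B_def K_def d_def .
qed

lemma Hen_neg: "Hen J \<Gamma> (\<lambda>i. - w i) = Hen J \<Gamma> w"
  unfolding Hen_def by simp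

lemma minimizer_neg:
  assumes "minimizer J \<Gamma> u" shows "minimizer J \<Gamma> (\<lambda>i. - u i)"
  unfolding minimizer_def
proof (intro allI impI)
  fix v assume v: "is_config v" "\<forall>i. i \<notin> \<Gamma> \<longrightarrow> v i = - u i"
  have "is_config (\<lambda>i. - v i)" using v(1) unfolding is_config_def by auto
  moreover have "\<forall>i. i \<notin> \<Gamma> \<longrightarrow> - v i = u i" using v(2) by auto
  ultimately have "Hen J \<Gamma> u \<le> Hen J \<Gamma> (\<lambda>i. - v i)" using assms unfolding minimizer_def by blast
  then show "Hen J \<Gamma> (\<lambda>i. - u i) \<le> Hen J \<Gamma> v" by (simp add: Hen_neg)
qed

theorem mainTheorem12:
  fixes s lam Lam :: real
  assumes "CARD('n) \<ge> 2"
    and "0 < s" and "s < 1" and "0 < lam" and "lam \<le> Lam"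
  shows "\<exists>c>0. \<forall>(J :: int^'n \<Rightarrow> int^'n \<Rightarrow> real) u q l.
           (\<forall>i j. J i j \<ge> 0) \<longrightarrow> J1 J \<longrightarrow> J2 J \<longrightarrow> J5 J \<longrightarrow> JP s lam Lam J \<longrightarrow>
           is_config u \<longrightarrow> minimizer J (cube l q) u \<longrightarrow> q \<in> bdry u \<longrightarrow>
           real (min (card ({i. u i = -1} \<inter> cube l q)) (card ({i. u i = 1} \<inter> cube l q)))
             \<ge> c * real l ^ CARD('n)"
proof (intro exI conjI allI impI)
  define c where "c = iterc (Kc lam Lam s CARD('n)) s CARD('n)"
  show "0 < iterc (Kc lam Lam s CARD('n)) s CARD('n)"
  proof (rule iterc_pos)
    have "0 < cisoc s CARD('n)" using cisoc_pos[of "CARD('n)"] by simp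
    then show "0 < Kc lam Lam s CARD('n)" unfolding Kc_def using assms Ctc_pos[of s] by simp
  qed (use assms in simp)
  fix J :: "int^'n \<Rightarrow> int^'n \<Rightarrow> real" and u q l
  assume Jnn: "\<forall>i j. J i j \<ge> 0" and J1: "J1 J" and J2: "J2 J" and "J5 J" and JP: "JP s lam Lam J"
    and cfg: "is_config u" and min: "minimizer J (cube l q) u" and qb: "q \<in> bdry u"
  obtain j where j: "u q = 1" "l1norm (q - j) = 1" "u j = -1" using qb unfolding bdry_def by auto
  have jq: "linfnorm (j - q) \<le> 1" using linf_le_l1[of "j - q"] l1_minus[of q j] j(2) by simp
  have c1: "iterc (Kc lam Lam s CARD('n)) s CARD('n) * real l ^ CARD('n) \<le> real (card ({i. u i = -1} \<inter> cube l q))"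
    by (rule count_lower[OF Jnn J1 J2 JP]) (use assms cfg min j(3) jq in auto)
  have cfg': "is_config (\<lambda>i. - u i)" using cfg unfolding is_config_def by auto
  have c2: "iterc (Kc lam Lam s CARD('n)) s CARD('n) * real l ^ CARD('n) \<le> real (card ({i. - u i = -1} \<inter> cube l q))"
    by (rule count_lower[OF Jnn J1 J2 JP _ _ _ _ cfg' minimizer_neg[OF min], of q]) (use assms j(1) linf_zero_iff[of "0::int^'n"] in auto)
  have e: "{i. - u i = -1} = {i. u i = 1}" by auto
  show "iterc (Kc lam Lam s CARD('n)) s CARD('n) * real l ^ CARD('n)
        \<le> real (min (card ({i. u i = -1} \<inter> cube l q)) (card ({i. u i = 1} \<inter> cube l q)))"
    using c1 c2 unfolding e by simp
qed


end
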